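(* Assume $\Delta^2=0$, constant budget $\Lambda(t)=\Lambda$, $\pi_0<1$ with $\pi_0\ge(1-\pi_0)/|G|$, and hypothesis (U). Then as $t\to\infty$ the expected per-stage cost of the semi-omniscient policy satisfies $$\mathbb E[M_t(\lambda^s)]\ge\frac{p_0Q(p_0Q+1-p_0)}{\pi_0\Lambda t}+O\!\left(\frac1{t^2}\right).$$
   Context: Model. There are $Q$ cells. At time $1$ each cell independently contains a target with probability $p_0\in(0,1)$; $\Psi(t)$ is the set of target locations at time $t$, the number of targets $|\Psi(1)|\sim\mathrm{Binomial}(Q,p_0)$ is constant in time, and at most one target occupies a cell. Each cell $j$ has a set $G(j)$ of neighbours with $|G(j)|=|G|$; $H(j)=\{j\}\cup G(j)$, $G(S)=\bigcup_{j\in S}G(j)$, $H(S)=S\cup G(S)$; neighbourhoods of distinct targets are disjoint. Between stages each target independently stays with probability $\pi_0$, otherwise moves to a uniformly chosen neighbour. Amplitudes: initial $\mathcal N(\mu_0,\sigma_0^2)$, random walk with $\mathcal N(0,\Delta^2)$ increments. Observations $y_i(t)=\sqrt{\lambda_i(t)}I_i(t)\theta_i(t)+n_i(t)$, $n_i(t)$ i.i.d. $\mathcal N(0,\sigma^2)$, efforts $\lambda_i(t)\ge0$, $\sum_i\lambda_i(t)\le\Lambda(t)$. Posterior precisions start at $c_i(1)=\sigma^2/\sigma_0^2$ and evolve by: for each target $n$ at $s^{(n)}(t)$ and each $i\in H(s^{(n)}(t))$, $1/c_i(t+1)=1/(c_{s^{(n)}(t)}(t)+\lambda_{s^{(n)}(t)}(t))+\Delta^2/\sigma^2$.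 The expected per-stage cost of a policy is $\mathbb E[M_t(\lambda)]=\mathbb E\big[\sum_{i\in\Psi(t)}1/(c_i(t)+\lambda_i(t))\big]$. Semi-omniscient policy: at stage $t$ it knows $\Psi(t-1)$, so $p_i(t)=\pi_0$ on $\Psi(t-1)$, $(1-\pi_0)/|G|$ on $G(\Psi(t-1))$, $0$ elsewhere, and allocates $\lambda^s(t)$ minimizing $\sum_ip_i(t)/(c_i(t)+\lambda_i)$ over $\lambda\ge0$, $\sum_i\lambda_i=\Lambda(t)$. Hypothesis (U): for every $t>1$, $c_i(t)=\bar c(t)$ for all $i\in H(\Psi(t-1))$, where $\bar c$ is the sequence with $\bar c(1)=\sigma^2/\sigma_0^2$ and $\bar c(t+1)=\frac{\pi_0^{3/2}+|G|^{-1/2}(1-\pi_0)^{3/2}}{\sqrt{\pi_0}+\sqrt{|G|(1-\pi_0)}}\big((1+|G|)\bar c(t)+\Lambda/|\Psi(1)|\big)$ if $\bar c(t)<c_{\mathrm{crit}}$ and $\bar c(t+1)=\bar c(t)+\pi_0\Lambda/|\Psi(1)|$ otherwise, with $c_{\mathrm{crit}}=\Lambda/(|\Psi(1)|e(\pi_0,G))$, $e(\pi_0,G)=\sqrt{|G|\pi_0/(1-\pi_0)}-1$. *)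

theory Defs
  imports "HOL-Probability.Probability" "HOL-Library.Landau_Symbols"
begin

text \<open>Abstraction of the stage-t configuration: with k = |Psi(1)| targets,
  target n (n < k) sits at Psi(t-1) in the cell (n,0); its |G| = g neighbours are
  the cells (n,j), 1 \<le> j \<le> g.  Neighbourhoods of distinct targets are disjoint.
  The cells relevant at stage t are H(Psi(t-1)).\<close>

definition rel_cells :: "nat \<Rightarrow> nat \<Rightarrow> (nat \<times> nat) set" where
  "rel_cells k g = {..<k} \<times> {0..g}"

definition move_pmf :: "real \<Rightarrow> nat \<Rightarrow> nat pmf" where
  "move_pmf pi0 g = bind_pmf (bernoulli_pmf pi0)
     (\<lambda>stay. if stay then return_pmf 0 else pmf_of_set {1..g})"

text \<open>Semi-omniscient probabilities p_i(t) on H(Psi(t-1)) (zero elsewhere).\<close>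
definition p_semi :: "real \<Rightarrow> nat \<Rightarrow> nat \<Rightarrow> real" where
  "p_semi pi0 g j = (if j = 0 then pi0 else (1 - pi0) / real g)"

definition e_fun :: "real \<Rightarrow> nat \<Rightarrow> real" where
  "e_fun pi0 g = sqrt (real g * pi0 / (1 - pi0)) - 1"

definition c_crit :: "real \<Rightarrow> nat \<Rightarrow> real \<Rightarrow> nat \<Rightarrow> real" where
  "c_crit pi0 g Lam k = Lam / (real k * e_fun pi0 g)"

definition alpha_coef :: "real \<Rightarrow> nat \<Rightarrow> real" where
  "alpha_coef pi0 g =
     (pi0 powr (3/2) + (real g) powr (-1/2) * (1 - pi0) powr (3/2))
       / (sqrt pi0 + sqrt (real g * (1 - pi0)))"

text \<open>The sequence cbar(t) (t \<ge> 1; the value at index 0 is a dummy),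
  with c1 = sigma^2/sigma0^2 and k = |Psi(1)|.\<close>
fun cbar :: "real \<Rightarrow> nat \<Rightarrow> real \<Rightarrow> real \<Rightarrow> nat \<Rightarrow> nat \<Rightarrow> real" where
  "cbar pi0 g Lam c1 k 0 = c1"
| "cbar pi0 g Lam c1 k (Suc 0) = c1"
| "cbar pi0 g Lam c1 k (Suc (Suc t)) =
     (let c = cbar pi0 g Lam c1 k (Suc t) in
      if c < c_crit pi0 g Lam k
      then alpha_coef pi0 g * ((1 + real g) * c + Lam / real k)
      else c + pi0 * Lam / real k)"

text \<open>Semi-omniscient allocation at a stage where every relevant cell has
  posterior precision c (hypothesis (U)): lam minimises
  sum_i p_i/(c + lam_i) over lam \<ge> 0 with sum_i lam_i = Lam.\<close>
definition feasible_alloc :: "nat \<Rightarrow> nat \<Rightarrow> real \<Rightarrow> (nat \<times> nat \<Rightarrow> real) \<Rightarrow> bool" where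
  "feasible_alloc k g Lam l \<longleftrightarrow>
     (\<forall>i\<in>rel_cells k g. 0 \<le> l i) \<and> (\<Sum>i\<in>rel_cells k g. l i) = Lam"

definition alloc_obj :: "real \<Rightarrow> nat \<Rightarrow> nat \<Rightarrow> real \<Rightarrow> (nat \<times> nat \<Rightarrow> real) \<Rightarrow> real" where
  "alloc_obj pi0 g k c l = (\<Sum>i\<in>rel_cells k g. p_semi pi0 g (snd i) / (c + l i))"

definition semi_omniscient_alloc ::
  "real \<Rightarrow> nat \<Rightarrow> real \<Rightarrow> nat \<Rightarrow> real \<Rightarrow> (nat \<times> nat \<Rightarrow> real) \<Rightarrow> bool" where
  "semi_omniscient_alloc pi0 g Lam k c l \<longleftrightarrow>
     feasible_alloc k g Lam l \<and>
     (\<forall>l'. feasible_alloc k g Lam l' \<longrightarrow> alloc_obj pi0 g k c l \<le> alloc_obj pi0 g k c l')"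

text \<open>Joint law of (|Psi(1)|, Psi(t)) at stage t: k ~ Binomial(Q,p0), and target n
  is at cell (n, pos n) where the offsets pos n are i.i.d. move_pmf.\<close>
definition stage_pmf :: "nat \<Rightarrow> real \<Rightarrow> real \<Rightarrow> nat \<Rightarrow> (nat \<times> (nat \<Rightarrow> nat)) pmf" where
  "stage_pmf Q p0 pi0 g = bind_pmf (binomial_pmf Q p0)
     (\<lambda>k. map_pmf (\<lambda>pos. (k, pos)) (Pi_pmf {..<k} 0 (\<lambda>_. move_pmf pi0 g)))"

text \<open>E[M_t(lam^s)] = E[ sum_{i in Psi(t)} 1/(c_i(t) + lam^s_i(t)) ], with
  c_i(t) = cbar(t) on H(Psi(t-1)) by hypothesis (U).  lam k t is the
  semi-omniscient allocation used at stage t when |Psi(1)| = k.\<close>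
definition expected_cost ::
  "nat \<Rightarrow> real \<Rightarrow> real \<Rightarrow> nat \<Rightarrow> real \<Rightarrow> real \<Rightarrow>
   (nat \<Rightarrow> nat \<Rightarrow> nat \<times> nat \<Rightarrow> real) \<Rightarrow> nat \<Rightarrow> real" where
  "expected_cost Q p0 pi0 g Lam c1 lam t =
     measure_pmf.expectation (stage_pmf Q p0 pi0 g)
       (\<lambda>(k, pos). \<Sum>n<k. 1 / (cbar pi0 g Lam c1 k t + lam k t (n, pos n)))"

end

theory Submission
  imports Defs
begin

lemma sum_0g: "(\<Sum>j\<in>{0..g::nat}. F j) = F 0 + (\<Sum>j\<in>{1..g}. F j)"
proof -
  have e: "{0..g} = insert 0 {1..g}" by auto
  show ?thesis unfolding e by (subst sum.insert) auto
qed

lemma set_move: assumes "g \<ge> 1" shows "set_pmf (move_pmf pi0 g) \<subseteq> {0..g}"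
proof
  fix j assume "j \<in> set_pmf (move_pmf pi0 g)"
  then obtain b where b: "j \<in> set_pmf (if b then return_pmf 0 else pmf_of_set {1..g})"
    unfolding move_pmf_def set_bind_pmf by blast
  have ne: "{1..g} \<noteq> {}" using assms by simp
  show "j \<in> {0..g}"
  proof (cases b)
    case True then show ?thesis using b by simp
  next
    case False then have "j \<in> set_pmf (pmf_of_set {1..g})" using b by simp
    then show ?thesis using set_pmf_of_set[OF ne] by simp
  qed
qed

lemma finite_move: "g \<ge> 1 \<Longrightarrow> finite (set_pmf (move_pmf pi0 g))"
  using set_move finite_subset by blast
lemma exp_move:
  fixes f :: "nat \<Rightarrow> real"
  assumes "0 \<le> pi0" "pi0 \<le> 1" "g \<ge> 1"
  shows "measure_pmf.expectation (move_pmf pi0 g) f = (\<Sum>j\<in>{0..g}. p_semi pi0 g j * f j)"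
proof -
  have ne: "{1..g} \<noteq> {}" using assms by auto
  have "measure_pmf.expectation (move_pmf pi0 g) f
     = (\<Sum>b\<in>UNIV. pmf (bernoulli_pmf pi0) b *\<^sub>R measure_pmf.expectation (if b then return_pmf 0 else pmf_of_set {1..g}) f)"
    unfolding move_pmf_def
  proof (rule pmf_expectation_bind)
    have "finite (set_pmf (pmf_of_set {1..g}))" using ne by (subst set_pmf_of_set) auto
    then show "\<And>x. x \<in> UNIV \<Longrightarrow> finite (set_pmf (if x then return_pmf 0 else pmf_of_set {1..g}))"
      by auto
  qed auto
  also have "\<dots> = pi0 * f 0 + (1 - pi0) * (sum f {1..g} / g)"
    using assms ne by (simp add: UNIV_bool integral_pmf_of_set)
  also have "\<dots> = (\<Sum>j\<in>{0..g}. p_semi pi0 g j * f j)"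
  proof -
    have e: "{0..g} = insert 0 {1..g}" by auto
    have "(\<Sum>j\<in>{1..g}. p_semi pi0 g j * f j) = (1 - pi0) / g * sum f {1..g}"
      by (simp add: p_semi_def sum_distrib_left)
    then show ?thesis by (simp add: e p_semi_def)
  qed
  finally show ?thesis .
qed

lemma finite_Pi_move: assumes "g \<ge> 1" shows "finite (set_pmf (Pi_pmf {..<(k::nat)} 0 (\<lambda>_. move_pmf pi0 g)))"
proof -
  have "finite (PiE_dflt {..<k} 0 (set_pmf \<circ> (\<lambda>_. move_pmf pi0 g)))"
    by (rule finite_PiE_dflt) (auto simp: finite_move[OF assms])
  then show ?thesis by (simp add: set_Pi_pmf)
qed

lemma exp_Pi:
  fixes F :: "nat \<Rightarrow> nat \<Rightarrow> real"
  assumes "0 \<le> pi0" "pi0 \<le> 1" "g \<ge> 1"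
  shows "measure_pmf.expectation (Pi_pmf {..<k} 0 (\<lambda>_. move_pmf pi0 g)) (\<lambda>pos. \<Sum>n<k. F n (pos n))
     = (\<Sum>n<k. \<Sum>j\<in>{0..g}. p_semi pi0 g j * F n j)"
proof -
  have "measure_pmf.expectation (Pi_pmf {..<k} 0 (\<lambda>_. move_pmf pi0 g)) (\<lambda>pos. \<Sum>n<k. F n (pos n))
     = (\<Sum>n<k. measure_pmf.expectation (Pi_pmf {..<k} 0 (\<lambda>_. move_pmf pi0 g)) (\<lambda>pos. F n (pos n)))"
    by (rule Bochner_Integration.integral_sum) (rule integrable_measure_pmf_finite[OF finite_Pi_move[OF assms(3)]])
  also have "\<dots> = (\<Sum>n<k. measure_pmf.expectation (move_pmf pi0 g) (F n))"
  proof (rule sum.cong[OF refl])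
    fix n assume n: "n \<in> {..<k}"
    have "measure_pmf.expectation (Pi_pmf {..<k} 0 (\<lambda>_. move_pmf pi0 g)) (\<lambda>pos. F n (pos n))
      = measure_pmf.expectation (map_pmf (\<lambda>f. f n) (Pi_pmf {..<k} 0 (\<lambda>_. move_pmf pi0 g))) (F n)"
      by simp
    also have "map_pmf (\<lambda>f. f n) (Pi_pmf {..<k} 0 (\<lambda>_. move_pmf pi0 g)) = move_pmf pi0 g"
      using n by (subst Pi_pmf_component) auto
    finally show "measure_pmf.expectation (Pi_pmf {..<k} 0 (\<lambda>_. move_pmf pi0 g)) (\<lambda>pos. F n (pos n)) = measure_pmf.expectation (move_pmf pi0 g) (F n)" .
  qed
  also have "\<dots> = (\<Sum>n<k. \<Sum>j\<in>{0..g}. p_semi pi0 g j * F n j)"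
    using exp_move[OF assms] by simp
  finally show ?thesis .
qed

lemma exp_stage:
  assumes "0 < p0" "p0 < 1" "0 \<le> pi0" "pi0 \<le> 1" "g \<ge> 1"
  shows "expected_cost Q p0 pi0 g Lam c1 lam t
    = (\<Sum>k\<le>Q. pmf (binomial_pmf Q p0) k * alloc_obj pi0 g k (cbar pi0 g Lam c1 k t) (lam k t))"
proof -
  have "expected_cost Q p0 pi0 g Lam c1 lam t
    = (\<Sum>k\<le>Q. pmf (binomial_pmf Q p0) k *\<^sub>R measure_pmf.expectation
         (map_pmf (\<lambda>pos. (k, pos)) (Pi_pmf {..<k} 0 (\<lambda>_. move_pmf pi0 g)))
         (\<lambda>(k, pos). \<Sum>n<k. 1 / (cbar pi0 g Lam c1 k t + lam k t (n, pos n))))"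
    unfolding expected_cost_def stage_pmf_def
    using assms by (intro pmf_expectation_bind) (auto simp: finite_Pi_move[OF assms(5)])
  also have "\<dots> = (\<Sum>k\<le>Q. pmf (binomial_pmf Q p0) k * alloc_obj pi0 g k (cbar pi0 g Lam c1 k t) (lam k t))"
  proof (rule sum.cong[OF refl])
    fix k
    have "measure_pmf.expectation
         (map_pmf (\<lambda>pos. (k, pos)) (Pi_pmf {..<k} 0 (\<lambda>_. move_pmf pi0 g)))
         (\<lambda>(k, pos). \<Sum>n<k. 1 / (cbar pi0 g Lam c1 k t + lam k t (n, pos n)))
       = measure_pmf.expectation (Pi_pmf {..<k} 0 (\<lambda>_. move_pmf pi0 g))
         (\<lambda>pos. \<Sum>n<k. 1 / (cbar pi0 g Lam c1 k t + lam k t (n, pos n)))" by simp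
    also have "\<dots> = (\<Sum>n<k. \<Sum>j\<in>{0..g}. p_semi pi0 g j * (1 / (cbar pi0 g Lam c1 k t + lam k t (n, j))))"
      by (rule exp_Pi[OF assms(3-5)])
    also have "\<dots> = alloc_obj pi0 g k (cbar pi0 g Lam c1 k t) (lam k t)"
      unfolding alloc_obj_def rel_cells_def
      by (subst sum.cartesian_product) (simp add: case_prod_unfold)
    finally show "pmf (binomial_pmf Q p0) k *\<^sub>R measure_pmf.expectation
         (map_pmf (\<lambda>pos. (k, pos)) (Pi_pmf {..<k} 0 (\<lambda>_. move_pmf pi0 g)))
         (\<lambda>(k, pos). \<Sum>n<k. 1 / (cbar pi0 g Lam c1 k t + lam k t (n, pos n)))
      = pmf (binomial_pmf Q p0) k * alloc_obj pi0 g k (cbar pi0 g Lam c1 k t) (lam k t)" by simp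
  qed
  finally show ?thesis .
qed

lemma id_nb: "(y::real) > 0 \<Longrightarrow> x > 0 \<Longrightarrow> p / x + p * (x - (y - a)) / y^2 - p / y = p * ((x - y)^2 / (x * y^2) + a / y^2)"
  by (simp add: divide_simps power2_eq_square) (simp add: algebra_simps)

lemma id_c: "(y::real) > 0 \<Longrightarrow> x > 0 \<Longrightarrow> P / x - (P / y + P * a / y^2 - P * (x - (y - a)) / y^2) = P * ((x - y)^2 / (x * y^2))"
  by (simp add: divide_simps power2_eq_square) (simp add: algebra_simps)

lemma cell_nb':
  fixes p P x c a y :: real
  assumes "0 \<le> p" "p \<le> P" "c > 0" "x \<ge> c" "a \<ge> 0" and yc: "c = y - a"
  shows "p / y - P * (x - c) / y^2 \<le> p / x"
proof -
  have y: "y > 0" "x > 0" using assms by linarith+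
  have "p * (x - c) / y^2 \<le> P * (x - c) / y^2"
    using assms by (intro divide_right_mono mult_right_mono) simp_all
  moreover have "p / x + p * (x - c) / y^2 - p / y = p * ((x - y)^2 / (x * y^2) + a / y^2)"
    unfolding yc by (rule id_nb[OF y])
  moreover have "p * ((x - y)^2 / (x * y^2) + a / y^2) \<ge> 0"
    using assms y by (intro mult_nonneg_nonneg add_nonneg_nonneg divide_nonneg_pos) simp_all
  ultimately show ?thesis by linarith
qed

lemma cell_nb:
  fixes p P x c a :: real
  assumes "0 \<le> p" "p \<le> P" "c > 0" "x \<ge> c" "a \<ge> 0"
  shows "p / (c + a) - P * (x - c) / (c + a)^2 \<le> p / x"
  using cell_nb'[OF assms, of "c + a"] by simp

lemma cell_c':
  fixes P x c a y :: real
  assumes "0 \<le> P" "c > 0" "x \<ge> c" "a \<ge> 0" and yc: "c = y - a"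
  shows "P / y + P * a / y^2 - P * (x - c) / y^2 \<le> P / x"
proof -
  have y: "y > 0" "x > 0" using assms by linarith+
  have "P / x - (P / y + P * a / y^2 - P * (x - c) / y^2) = P * ((x - y)^2 / (x * y^2))"
    unfolding yc by (rule id_c[OF y])
  moreover have "P * ((x - y)^2 / (x * y^2)) \<ge> 0" using assms y by (intro mult_nonneg_nonneg divide_nonneg_pos) simp_all
  ultimately show ?thesis by linarith
qed

lemma cell_c:
  fixes P x c a :: real
  assumes "0 \<le> P" "c > 0" "x \<ge> c" "a \<ge> 0"
  shows "P / (c + a) + P * a / (c + a)^2 - P * (x - c) / (c + a)^2 \<le> P / x"
  using cell_c'[OF assms, of "c + a"] by simp

lemma alloc_bound:
  assumes feas: "feasible_alloc k g Lam l" and c: "c > 0" and k: "k \<ge> 1" and g: "g \<ge> 1"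
    and pi0: "0 < pi0" "pi0 < 1" "pi0 \<ge> (1 - pi0) / real g" and Lam: "Lam \<ge> 0"
  shows "real k / (c + Lam / k) \<le> alloc_obj pi0 g k c l"
proof -
  define a where "a = Lam / k"
  define y where "y = c + a"
  have a: "a \<ge> 0" using Lam by (simp add: a_def)
  have ka: "k * a = Lam" using k by (simp add: a_def)
  have lnn: "\<And>n j. n < k \<Longrightarrow> j \<le> g \<Longrightarrow> 0 \<le> l (n, j)"
    using feas unfolding feasible_alloc_def rel_cells_def by auto
  have lsum: "(\<Sum>n<k. \<Sum>j\<in>{0..g}. l (n, j)) = Lam"
    using feas unfolding feasible_alloc_def rel_cells_def
    by (subst sum.cartesian_product) (simp add: case_prod_unfold)
  have obj: "alloc_obj pi0 g k c l = (\<Sum>n<k. \<Sum>j\<in>{0..g}. p_semi pi0 g j / (c + l (n, j)))"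
    unfolding alloc_obj_def rel_cells_def
    by (subst sum.cartesian_product) (simp add: case_prod_unfold)
  have e: "{0..g} = insert 0 {1..g}" by auto
  have per: "1 / y + pi0 * a / y^2 - pi0 / y^2 * (\<Sum>j\<in>{0..g}. l (n, j))
      \<le> (\<Sum>j\<in>{0..g}. p_semi pi0 g j / (c + l (n, j)))" if n: "n < k" for n
  proof -
    have c0: "pi0 / y + pi0 * a / y^2 - pi0 * l (n, 0) / y^2 \<le> pi0 / (c + l (n, 0))"
      using cell_c[of pi0 c "c + l (n,0)" a] pi0 c a lnn[OF n, of 0] by (simp add: y_def)
    have nb: "(1 - pi0) / g / y - pi0 * l (n, j) / y^2 \<le> p_semi pi0 g j / (c + l (n, j))"
      if j: "j \<in> {1..g}" for j
      using cell_nb[of "(1 - pi0) / g" pi0 c "c + l (n,j)" a] pi0 c a lnn[OF n, of j] j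
      by (simp add: y_def p_semi_def)
    have "(\<Sum>j\<in>{1..g}. (1 - pi0) / g / y - pi0 * l (n, j) / y^2)
        \<le> (\<Sum>j\<in>{1..g}. p_semi pi0 g j / (c + l (n, j)))"
      by (rule sum_mono) (rule nb)
    moreover have "(\<Sum>j\<in>{1..g}. (1 - pi0) / g / y - pi0 * l (n, j) / y^2)
        = (1 - pi0) / y - pi0 / y^2 * (\<Sum>j\<in>{1..g}. l (n, j))"
      using g by (simp add: sum_subtractf sum_distrib_left sum_divide_distrib)
    moreover have "(\<Sum>j\<in>{0..g}. p_semi pi0 g j / (c + l (n, j)))
       = pi0 / (c + l (n, 0)) + (\<Sum>j\<in>{1..g}. p_semi pi0 g j / (c + l (n, j)))"
      by (subst sum_0g) (simp add: p_semi_def)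
    moreover have "(\<Sum>j\<in>{0..g}. l (n, j)) = l (n, 0) + (\<Sum>j\<in>{1..g}. l (n, j))"
      by (rule sum_0g)
    moreover have "(1 - pi0) / y + pi0 / y = 1 / y" by (simp add: divide_simps)
    moreover have "pi0 / y^2 * (\<Sum>j\<in>{0..g}. l (n, j))
      = pi0 * l (n, 0) / y^2 + pi0 / y^2 * (\<Sum>j\<in>{1..g}. l (n, j))"
      by (subst sum_0g) (simp add: algebra_simps)
    ultimately show ?thesis using c0 by linarith
  qed
  have s1: "(\<Sum>n<k. 1 / y + pi0 * a / y^2 - pi0 / y^2 * (\<Sum>j\<in>{0..g}. l (n, j)))
      \<le> alloc_obj pi0 g k c l"
    unfolding obj by (rule sum_mono) (rule per, simp)
  have s2: "(\<Sum>n<k. 1 / y + pi0 * a / y^2 - pi0 / y^2 * (\<Sum>j\<in>{0..g}. l (n, j)))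
     = k / y + pi0 * (k * a) / y^2 - pi0 / y^2 * Lam"
  proof -
    have "(\<Sum>n<k. pi0 / y^2 * (\<Sum>j\<in>{0..g}. l (n, j))) = pi0 / y^2 * Lam"
      by (simp only: sum_distrib_left[symmetric] lsum)
    then show ?thesis by (simp add: sum_subtractf algebra_simps)
  qed
  have s3: "k / y + pi0 * (k * a) / y^2 - pi0 / y^2 * Lam = k / y" using ka by simp
  have fin: "k / y \<le> alloc_obj pi0 g k c l" using s1 unfolding s2 s3 .
  show ?thesis using fin unfolding y_def a_def .
qed

lemma alpha_pos:
  assumes "0 < pi0" "pi0 < 1" "g \<ge> 1"
  shows "alpha_coef pi0 g > 0"
proof -
  have "pi0 powr (3/2) > 0" using assms by simp
  moreover have "(real g) powr (-1/2) * (1 - pi0) powr (3/2) \<ge> 0" by simp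
  moreover have "sqrt pi0 + sqrt (real g * (1 - pi0)) > 0" using assms
    by (intro add_pos_nonneg) auto
  ultimately show ?thesis unfolding alpha_coef_def by (intro divide_pos_pos) linarith+
qed

lemma cbar_bound:
  assumes pi0: "0 < pi0" "pi0 < 1" and g: "g \<ge> 1" and k: "k \<ge> 1" and Lam: "Lam > 0" and c1: "c1 > 0"
  defines "M \<equiv> max c1 (alpha_coef pi0 g * ((1 + real g) * c_crit pi0 g Lam k + Lam / real k))"
  shows "0 < cbar pi0 g Lam c1 k t \<and> cbar pi0 g Lam c1 k t \<le> M + pi0 * (Lam / real k) * real t"
proof (induction t)
  case 0
  have "0 \<le> pi0 * (Lam / real k) * real 0" by simp
  then show ?case using c1 by (simp add: M_def)
next
  case (Suc t)
  have pa: "0 \<le> pi0 * (Lam / real k)" using pi0 Lam by simp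
  have a: "Lam / real k > 0" using Lam k by simp
  have al: "alpha_coef pi0 g > 0" by (rule alpha_pos[OF pi0 g])
  show ?case
  proof (cases t)
    case 0
    have "0 \<le> pi0 * (Lam / real k) * real (Suc 0)" using pa by simp
    then show ?thesis using c1 0 by (simp add: M_def)
  next
    case (Suc t')
    define c where "c = cbar pi0 g Lam c1 k (Suc t')"
    have IH: "0 < c" "c \<le> M + pi0 * (Lam / real k) * real t"
      using Suc.IH unfolding c_def Suc by auto
    show ?thesis
    proof (cases "c < c_crit pi0 g Lam k")
      case True
      have v: "cbar pi0 g Lam c1 k (Suc t) = alpha_coef pi0 g * ((1 + real g) * c + Lam / real k)"
        using True unfolding Suc c_def by (simp add: Let_def)
      have "0 < alpha_coef pi0 g * ((1 + real g) * c + Lam / real k)"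
        using al IH a g by (intro mult_pos_pos add_pos_pos) auto
      moreover have "alpha_coef pi0 g * ((1 + real g) * c + Lam / real k)
          \<le> alpha_coef pi0 g * ((1 + real g) * c_crit pi0 g Lam k + Lam / real k)"
        using al True by (intro mult_left_mono add_right_mono) auto
      moreover have "\<dots> \<le> M" unfolding M_def by simp
      moreover have "0 \<le> pi0 * (Lam / real k) * real (Suc t)" by (rule mult_nonneg_nonneg[OF pa]) simp
      ultimately show ?thesis unfolding v by linarith
    next
      case False
      have v: "cbar pi0 g Lam c1 k (Suc t) = c + pi0 * Lam / real k"
        using False unfolding Suc c_def by (simp add: Let_def)
      have "pi0 * Lam / real k = pi0 * (Lam / real k)" by simp
      moreover have "pi0 * (Lam / real k) * real (Suc t) = pi0 * (Lam / real k) * real t + pi0 * (Lam / real k)"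
        by (simp add: algebra_simps add_divide_distrib)
      ultimately show ?thesis unfolding v using IH pa by linarith
    qed
  qed
qed

lemma binom_exp_Suc:
  fixes f :: "nat \<Rightarrow> real"
  assumes p: "p \<in> {0..1}"
  shows "measure_pmf.expectation (binomial_pmf (Suc n) p) f
     = p * measure_pmf.expectation (binomial_pmf n p) (\<lambda>k. f (Suc k))
       + (1 - p) * measure_pmf.expectation (binomial_pmf n p) f"
proof -
  have "measure_pmf.expectation (binomial_pmf (Suc n) p) f
     = measure_pmf.expectation (bernoulli_pmf p \<bind> (\<lambda>b. map_pmf (\<lambda>k. (if b then 1 else 0) + k) (binomial_pmf n p))) f"
    by (subst binomial_pmf_Suc[OF p]) (simp add: map_pmf_def)
  also have "\<dots> = (\<Sum>b\<in>UNIV. pmf (bernoulli_pmf p) b *\<^sub>R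
        measure_pmf.expectation (map_pmf (\<lambda>k. (if b then 1 else 0) + k) (binomial_pmf n p)) f)"
    using p by (intro pmf_expectation_bind) (auto intro!: finite_imageI finite_set_pmf_binomial_pmf)
  also have "\<dots> = p * measure_pmf.expectation (binomial_pmf n p) (\<lambda>k. f (Suc k))
       + (1 - p) * measure_pmf.expectation (binomial_pmf n p) f"
    using p by (simp add: UNIV_bool)
  finally show ?thesis .
qed

lemma binom_moments:
  assumes p: "p \<in> {0..1}"
  shows "measure_pmf.expectation (binomial_pmf n p) (\<lambda>k. real k) = n * p \<and>
         measure_pmf.expectation (binomial_pmf n p) (\<lambda>k. (real k)^2) = n * p * (1 - p) + (n * p)^2"
proof (induction n)
  case 0
  then show ?case using p by (simp add: binomial_pmf_0)
next
  case (Suc n)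
  have i: "integrable (binomial_pmf n p) f" for f :: "nat \<Rightarrow> real" using p by simp
  have m1: "measure_pmf.expectation (binomial_pmf n p) (\<lambda>k. real (Suc k)) = n * p + 1"
  proof -
    have "(\<lambda>k. real (Suc k)) = (\<lambda>k. real k + 1)" by (simp add: add.commute)
    then show ?thesis using Suc.IH i by (simp add: Bochner_Integration.integral_add)
  qed
  have m2: "measure_pmf.expectation (binomial_pmf n p) (\<lambda>k. (real (Suc k))^2)
      = (n * p * (1 - p) + (n * p)^2) + 2 * (n * p) + 1"
  proof -
    have "(\<lambda>k. (real (Suc k))^2) = (\<lambda>k. (real k)^2 + 2 * real k + 1)"
      by (simp add: power2_eq_square algebra_simps)
    then show ?thesis using Suc.IH i by (simp add: Bochner_Integration.integral_add)
  qed
  have IH1: "measure_pmf.expectation (binomial_pmf n p) (\<lambda>k. real k) = n * p"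
    and IH2: "measure_pmf.expectation (binomial_pmf n p) (\<lambda>k. (real k)^2) = n * p * (1 - p) + (n * p)^2"
    using Suc.IH by auto
  have A: "measure_pmf.expectation (binomial_pmf (Suc n) p) (\<lambda>k. real k)
     = p * measure_pmf.expectation (binomial_pmf n p) (\<lambda>k. real (Suc k))
       + (1 - p) * measure_pmf.expectation (binomial_pmf n p) (\<lambda>k. real k)"
    by (rule binom_exp_Suc[OF p])
  have B: "measure_pmf.expectation (binomial_pmf (Suc n) p) (\<lambda>k. (real k)^2)
     = p * measure_pmf.expectation (binomial_pmf n p) (\<lambda>k. (real (Suc k))^2)
       + (1 - p) * measure_pmf.expectation (binomial_pmf n p) (\<lambda>k. (real k)^2)"
    by (rule binom_exp_Suc[OF p])
  show ?case
    unfolding A B m1 m2 IH1 IH2 by (simp add: algebra_simps power2_eq_square)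
qed

lemma binom_second:
  assumes "0 \<le> p" "p \<le> 1"
  shows "(\<Sum>k\<le>Q. pmf (binomial_pmf Q p) k * (real k)^2) = p * real Q * (p * real Q + 1 - p)"
proof -
  have "(\<Sum>k\<le>Q. pmf (binomial_pmf Q p) k * (real k)^2)
      = measure_pmf.expectation (binomial_pmf Q p) (\<lambda>k. (real k)^2)"
    using assms by (subst expectation_binomial_pmf') auto
  also have "\<dots> = Q * p * (1 - p) + (Q * p)^2" using binom_moments[of p Q] assms by simp
  finally show ?thesis by (simp add: algebra_simps power2_eq_square)
qed

lemma recip_bound:
  fixes X Y :: real assumes "X \<ge> 0" "Y > 0"
  shows "1 / Y - X / Y^2 \<le> 1 / (X + Y)"
proof -
  have "1 / Y - X / Y^2 = (Y - X) / Y^2" using assms by (simp add: field_simps power2_eq_square)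
  also have "\<dots> \<le> 1 / (X + Y)"
  proof -
    have "(Y - X) * (X + Y) \<le> Y^2" by (simp add: algebra_simps power2_eq_square)
    then show ?thesis using assms by (simp add: divide_simps)
  qed
  finally show ?thesis .
qed

theorem proposition2:
  fixes Q g :: nat and p0 pi0 Lam sigma sigma0 :: real
    and lam :: "nat \<Rightarrow> nat \<Rightarrow> nat \<times> nat \<Rightarrow> real"
  assumes p0: "0 < p0" "p0 < 1"
    and pi0: "0 \<le> pi0" "pi0 < 1" "pi0 \<ge> (1 - pi0) / real g"
    and g: "g \<ge> 1"
    and Lam: "Lam > 0"
    and sig: "sigma > 0" "sigma0 > 0"
    and semi: "\<And>k t. 1 \<le> k \<Longrightarrow> 2 \<le> t \<Longrightarrow>
       semi_omniscient_alloc pi0 g Lam k (cbar pi0 g Lam (sigma^2 / sigma0^2) k t) (lam k t)"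
  shows "\<exists>h. h \<in> O(\<lambda>t. 1 / (real t)^2) \<and>
     (\<forall>\<^sub>F t in at_top.
        expected_cost Q p0 pi0 g Lam (sigma^2 / sigma0^2) lam t
          \<ge> p0 * real Q * (p0 * real Q + 1 - p0) / (pi0 * Lam * real t) + h t)"
proof -
  define c1 where "c1 = sigma^2 / sigma0^2"
  have c1: "c1 > 0" using sig by (simp add: c1_def)
  have pi0p: "0 < pi0"
  proof (rule ccontr)
    assume "\<not> 0 < pi0"
    then have "pi0 = 0" using pi0 by simp
    then show False using pi0(3) g by simp
  qed
  define M where "M k = max c1 (alpha_coef pi0 g * ((1 + real g) * c_crit pi0 g Lam k + Lam / real k))" for k
  define X where "X k = M k + Lam / real k" for k
  define D where "D k = real k ^ 3 * X k / (pi0 * Lam)^2" for k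
  define Dt where "Dt = (\<Sum>k\<le>Q. pmf (binomial_pmf Q p0) k * D k)"
  have per: "(real k)^2 / (pi0 * Lam * real t) - D k / (real t)^2
      \<le> alloc_obj pi0 g k (cbar pi0 g Lam c1 k t) (lam k t)" if t: "t \<ge> 2" for k t
  proof (cases "k = 0")
    case True
    then show ?thesis by (simp add: alloc_obj_def rel_cells_def D_def)
  next
    case False
    then have k: "k \<ge> 1" by simp
    define c where "c = cbar pi0 g Lam c1 k t"
    define a where "a = Lam / real k"
    define Y where "Y = pi0 * a * real t"
    have a: "a > 0" using Lam k by (simp add: a_def)
    have Y: "Y > 0" using pi0p a t by (simp add: Y_def)
    have cb: "0 < c" "c \<le> M k + pi0 * a * real t"
      using cbar_bound[OF pi0p pi0(2) g k Lam c1, of t] unfolding c_def a_def M_def by auto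
    have feas: "feasible_alloc k g Lam (lam k t)"
      using semi[OF k t] unfolding semi_omniscient_alloc_def c1_def by auto
    have ab: "real k / (c + a) \<le> alloc_obj pi0 g k c (lam k t)"
      unfolding a_def by (rule alloc_bound[OF feas cb(1) k g pi0p pi0(2) pi0(3)]) (use Lam in simp)
    have X0: "X k \<ge> 0" using c1 a unfolding X_def M_def a_def by (simp add: max_def)
    have le: "c + a \<le> X k + Y" using cb unfolding X_def Y_def a_def by simp
    have "real k / (X k + Y) \<le> real k / (c + a)"
      using le cb a by (intro divide_left_mono mult_pos_pos) auto
    moreover have "real k * (1 / Y - X k / Y^2) \<le> real k / (X k + Y)"
      using mult_left_mono[OF recip_bound[OF X0 Y], of "real k"] by simp
    moreover have "real k * (1 / Y - X k / Y^2) = (real k)^2 / (pi0 * Lam * real t) - D k / (real t)^2"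
      using k t pi0p Lam unfolding Y_def a_def D_def
      by (simp add: field_simps power2_eq_square power3_eq_cube)
    ultimately show ?thesis using ab unfolding c_def by linarith
  qed
  have w0: "\<And>k. 0 \<le> pmf (binomial_pmf Q p0) k" by simp
  have ev: "expected_cost Q p0 pi0 g Lam c1 lam t
      \<ge> p0 * real Q * (p0 * real Q + 1 - p0) / (pi0 * Lam * real t) + (- Dt / (real t)^2)"
    if t: "t \<ge> 2" for t
  proof -
    have "(\<Sum>k\<le>Q. pmf (binomial_pmf Q p0) k * ((real k)^2 / (pi0 * Lam * real t) - D k / (real t)^2))
      \<le> (\<Sum>k\<le>Q. pmf (binomial_pmf Q p0) k * alloc_obj pi0 g k (cbar pi0 g Lam c1 k t) (lam k t))"
      by (intro sum_mono mult_left_mono per[OF t] w0)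
    also have "\<dots> = expected_cost Q p0 pi0 g Lam c1 lam t"
      using p0 pi0p pi0(2) g by (subst exp_stage) auto
    finally have A: "(\<Sum>k\<le>Q. pmf (binomial_pmf Q p0) k * ((real k)^2 / (pi0 * Lam * real t) - D k / (real t)^2))
      \<le> expected_cost Q p0 pi0 g Lam c1 lam t" .
    have "(\<Sum>k\<le>Q. pmf (binomial_pmf Q p0) k * ((real k)^2 / (pi0 * Lam * real t) - D k / (real t)^2))
      = (\<Sum>k\<le>Q. pmf (binomial_pmf Q p0) k * (real k)^2) / (pi0 * Lam * real t) - Dt / (real t)^2"
      unfolding Dt_def
      by (simp add: sum_subtractf sum_divide_distrib right_diff_distrib times_divide_eq_right)
    also have "\<dots> = p0 * real Q * (p0 * real Q + 1 - p0) / (pi0 * Lam * real t) + (- Dt / (real t)^2)"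
      using p0 by (subst binom_second) auto
    finally show ?thesis using A by linarith
  qed
  show ?thesis
  proof (intro exI conjI)
    show "(\<lambda>t. - Dt / (real t)^2) \<in> O(\<lambda>t. 1 / (real t)^2)"
      by (intro bigoI[where c = "\<bar>Dt\<bar>"] always_eventually allI) (simp add: abs_divide)
    show "\<forall>\<^sub>F t in at_top. expected_cost Q p0 pi0 g Lam (sigma^2 / sigma0^2) lam t
          \<ge> p0 * real Q * (p0 * real Q + 1 - p0) / (pi0 * Lam * real t) + - Dt / (real t)^2"
      using eventually_ge_at_top[of "2::nat"] by eventually_elim (use ev in \<open>simp add: c1_def\<close>)
  qed
qed

end
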